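(* Let $\rho=|\psi\rangle\langle\psi|$ be an $n$-qubit pure state, let $S\subseteq[n]$ be a non-empty set of qubit labels with $s:=|S|$, and let $U=\bigotimes_{i\in S}U_i$ (acting as the identity on qubits outside $S$), where the $U_i\in U(2)$ are independent Haar-random single-qubit unitaries. For $\mathbf{z}\in\{0,1\}^s$ let $P_U(\mathbf{z})=\operatorname{tr}\big(U\rho U^\dagger(|\mathbf{z}\rangle\langle\mathbf{z}|\otimes \mathbb{I}_{[n]\setminus S})\big)$ be the probability of obtaining the bitstring $\mathbf{z}$ when the qubits in $S$ are measured in the computational basis after applying $U$. Then for every fixed bitstring $\mathbf{z}\in\{0,1\}^s$, $$\mathcal{C}_{|\psi\rangle}(S)=1-3^s\,\mathbb{E}_U\big[P_U(\mathbf{z})^2\big],$$ where $\mathbb{E}_U$ denotes the average over the Haar measure.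
   Context: $[n]=\{1,\dots,n\}$ labels the qubits. For an $n$-qubit pure state $|\psi\rangle$ and a non-empty $S\subseteq[n]$ with $s=|S|$, the concentratable entanglement is $\mathcal{C}_{|\psi\rangle}(S)=1-\frac{1}{2^s}\sum_{\alpha\subseteq S}\operatorname{tr}(\rho_\alpha^2)$, where $\rho_\alpha$ is the reduced state of $|\psi\rangle\langle\psi|$ on the qubits in $\alpha$ (all others traced out), and $\operatorname{tr}(\rho_\emptyset^2):=1$. *)

theory Defs
  imports "HOL-Probability.Probability"
begin

text \<open>Qubits are labelled by [n] = {1..n}. A computational basis state of the
n qubits is encoded by the set x \<subseteq> {1..n} of qubits in state 1 (qubit i is in state 1 iff i \<in> x).
A pure state vector is psi :: nat set \<Rightarrow> complex (amplitudes on Pow {1..n}).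
Single-qubit operators are 2x2 complex matrices indexed by bool (False = 0, True = 1),
with entry U $ r $ c for row r (output bit) and column c (input bit).\<close>

definition pure_state :: "nat \<Rightarrow> (nat set \<Rightarrow> complex) \<Rightarrow> bool" where
  "pure_state n psi \<longleftrightarrow> (\<Sum>x\<in>Pow {1..n}. (cmod (psi x))\<^sup>2) = 1"

text \<open>Reduced state rho_alpha of |psi><psi| on the qubits in alpha, as a matrix indexed by
subsets a, b of alpha (basis states of the qubits in alpha).\<close>
definition reduced_state :: "nat \<Rightarrow> (nat set \<Rightarrow> complex) \<Rightarrow> nat set \<Rightarrow> nat set \<Rightarrow> nat set \<Rightarrow> complex" where
  "reduced_state n psi \<alpha> a b = (\<Sum>c\<in>Pow ({1..n} - \<alpha>). psi (a \<union> c) * cnj (psi (b \<union> c)))"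

text \<open>Purity tr(rho_alpha^2), with tr(rho_empty^2) := 1.\<close>
definition purity :: "nat \<Rightarrow> (nat set \<Rightarrow> complex) \<Rightarrow> nat set \<Rightarrow> real" where
  "purity n psi \<alpha> = (if \<alpha> = {} then 1 else
     Re (\<Sum>a\<in>Pow \<alpha>. \<Sum>b\<in>Pow \<alpha>. reduced_state n psi \<alpha> a b * reduced_state n psi \<alpha> b a))"

definition conc_ent :: "nat \<Rightarrow> (nat set \<Rightarrow> complex) \<Rightarrow> nat set \<Rightarrow> real" where
  "conc_ent n psi S = 1 - (1 / 2 ^ card S) * (\<Sum>\<alpha>\<in>Pow S. purity n psi \<alpha>)"

definition adj2 :: "complex^bool^bool \<Rightarrow> complex^bool^bool" where
  "adj2 U = (\<chi> i j. cnj (U $ j $ i))"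

definition unitary2 :: "complex^bool^bool \<Rightarrow> bool" where
  "unitary2 U \<longleftrightarrow> U ** adj2 U = mat 1"

text \<open>Haar measure on U(2): a Borel probability measure on 2x2 complex matrices, concentrated
on U(2), invariant under left multiplication by every unitary (unique such measure).\<close>
definition haar_U2 :: "(complex^bool^bool) measure \<Rightarrow> bool" where
  "haar_U2 \<mu> \<longleftrightarrow> prob_space \<mu> \<and> sets \<mu> = sets (borel :: (complex^bool^bool) measure) \<and>
     (AE U in \<mu>. unitary2 U) \<and>
     (\<forall>V. unitary2 V \<longrightarrow> distr \<mu> borel (\<lambda>U. V ** U) = \<mu>)"

text \<open>(U psi)(x) for U = tensor product of Us i over i \<in> S, identity outside S.\<close>
definition apply_local :: "nat \<Rightarrow> nat set \<Rightarrow> (nat \<Rightarrow> complex^bool^bool) \<Rightarrow> (nat set \<Rightarrow> complex) \<Rightarrow> nat set \<Rightarrow> complex" where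
  "apply_local n S Us psi x =
     (\<Sum>y\<in>{y\<in>Pow {1..n}. y - S = x - S}. (\<Prod>i\<in>S. Us i $ (i \<in> x) $ (i \<in> y)) * psi y)"

text \<open>P_U(z): probability of outcome z (the set of qubits in S measured 1) when measuring
the qubits in S in the computational basis after applying U.\<close>
definition meas_prob :: "nat \<Rightarrow> nat set \<Rightarrow> (nat \<Rightarrow> complex^bool^bool) \<Rightarrow> (nat set \<Rightarrow> complex) \<Rightarrow> nat set \<Rightarrow> real" where
  "meas_prob n S Us psi z = (\<Sum>c\<in>Pow ({1..n} - S). (cmod (apply_local n S Us psi (z \<union> c)))\<^sup>2)"

end

theory Submission imports Defs begin

definition rs :: complex where "rs = complex_of_real (1 / sqrt 2)"

lemma rs_sq: "rs * rs = 1/2"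
  unfolding rs_def by (simp flip: of_real_mult)

lemma cnj_rs: "cnj rs = rs"
  unfolding rs_def by simp

definition dv :: "nat \<Rightarrow> bool \<Rightarrow> complex" where
  "dv k b = (if k = 0 then (if b then 0 else 1) else if k = 1 then (if b then 1 else 0)
     else rs * (if \<not> b then 1 else if k = 2 then 1 else if k = 3 then -1
       else if k = 4 then \<i> else -\<i>))"

lemma design_aux:
  fixes a0 a1 B0 B1 c0 c1 D0 D1 :: complex
  shows "(a0*B0*c0*D0 + a1*B1*c1*D1 + ((a0+a1)*(B0+B1)*(c0+c1)*(D0+D1) + (a0-a1)*(B0-B1)*(c0-c1)*(D0-D1)
  + (a0+\<i>*a1)*(B0-\<i>*B1)*(c0+\<i>*c1)*(D0-\<i>*D1) + (a0-\<i>*a1)*(B0+\<i>*B1)*(c0-\<i>*c1)*(D0+\<i>*D1))/4)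
  = (a0*B0+a1*B1)*(c0*D0+c1*D1) + (a0*D0+a1*D1)*(c0*B0+c1*B1)"
  by (simp add: algebra_simps power2_eq_square[symmetric])

lemma sq2: "complex_of_real (1 / sqrt 2) * complex_of_real (1 / sqrt 2) = 1/2"
  by (simp flip: of_real_mult)

lemma design:
  fixes a0 a1 b0 b1 c0 c1 d0 d1 :: complex
  shows "(\<Sum>j<6. (dv j False * a0 + dv j True * a1) * cnj (dv j False * b0 + dv j True * b1)
      * (dv j False * c0 + dv j True * c1) * cnj (dv j False * d0 + dv j True * d1))
    = (a0*cnj b0+a1*cnj b1)*(c0*cnj d0+c1*cnj d1) + (a0*cnj d0+a1*cnj d1)*(c0*cnj b0+c1*cnj b1)"
proof -
  have rr: "rs * rs = 1/2" by (rule rs_sq)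
  have r4: "rs * rs * (rs * rs) = 1/4" by (simp only: rr) simp
  have "(\<Sum>j<6. (dv j False * a0 + dv j True * a1) * cnj (dv j False * b0 + dv j True * b1)
      * (dv j False * c0 + dv j True * c1) * cnj (dv j False * d0 + dv j True * d1))
    = a0*cnj b0*c0*cnj d0 + a1*cnj b1*c1*cnj d1 + (rs*rs*(rs*rs)) * ((a0+a1)*(cnj b0+cnj b1)*(c0+c1)*(cnj d0+cnj d1) + (a0-a1)*(cnj b0-cnj b1)*(c0-c1)*(cnj d0-cnj d1)
  + (a0+\<i>*a1)*(cnj b0-\<i>*cnj b1)*(c0+\<i>*c1)*(cnj d0-\<i>*cnj d1) + (a0-\<i>*a1)*(cnj b0+\<i>*cnj b1)*(c0-\<i>*c1)*(cnj d0+\<i>*cnj d1))"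
    by (simp add: numeral_eq_Suc lessThan_Suc dv_def cnj_rs algebra_simps)
  also have "\<dots> = (a0*cnj b0+a1*cnj b1)*(c0*cnj d0+c1*cnj d1) + (a0*cnj d0+a1*cnj d1)*(c0*cnj b0+c1*cnj b1)"
    unfolding r4 using design_aux[of a0 "cnj b0" c0 "cnj d0" a1 "cnj b1" c1 "cnj d1"] by simp
  finally show ?thesis .
qed

lemma dv_norm: "dv k False * cnj (dv k False) + dv k True * cnj (dv k True) = 1"
proof -
  have e: "rs * cnj rs = 1/2" using rs_sq by (simp add: cnj_rs)
  have e2: "(rs * \<i>) * cnj (rs * \<i>) = 1/2" "(rs * -\<i>) * cnj (rs * -\<i>) = 1/2"
    using e by (simp_all add: algebra_simps)
  have "dv k False = rs \<or> k \<le> 1" by (simp add: dv_def)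
  then show ?thesis
    by (cases "k = 0"; cases "k = 1"; cases "k = 2"; cases "k = 3"; cases "k = 4") (simp_all add: dv_def e e2 del: complex_cnj_mult)
qed

definition Vmat :: "nat \<Rightarrow> bool \<Rightarrow> complex^bool^bool" where
  "Vmat k b = (\<chi> r j. if r = b then dv k j else (if j then cnj (dv k False) else - cnj (dv k True)))"

lemma Vmat_unitary: "unitary2 (Vmat k b)"
proof -
  have n: "dv k False * cnj (dv k False) + dv k True * cnj (dv k True) = 1" by (rule dv_norm)
  have n2: "cnj (dv k False) * dv k False + cnj (dv k True) * dv k True = 1"
    using n by (simp add: mult.commute)
  show ?thesis
    unfolding unitary2_def adj2_def Vmat_def vec_eq_iff
  proof (intro allI)
    fix r r' :: bool
    show "((\<chi> r j. if r = b then dv k j else if j then cnj (dv k False) else - cnj (dv k True)) **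
        (\<chi> i j. cnj ((\<chi> r j. if r = b then dv k j else if j then cnj (dv k False) else - cnj (dv k True)) $ j $ i))) $ r $ r' = mat 1 $ r $ r'"
      unfolding matrix_matrix_mult_def mat_def
      by (cases r; cases r'; cases b) (simp_all add: UNIV_bool n n2 mult.commute)
  qed
qed

lemma unitary_cols:
  assumes "unitary2 U"
  shows "U $ False $ a * cnj (U $ False $ b) + U $ True $ a * cnj (U $ True $ b) = (if a = b then 1 else 0)"
proof -
  have "adj2 U ** U = mat 1" using assms unfolding unitary2_def by (simp add: matrix_left_right_inverse)
  then have "(adj2 U ** U) $ b $ a = mat 1 $ b $ a" by simp
  then show ?thesis by (auto simp: matrix_matrix_mult_def adj2_def mat_def UNIV_bool mult.commute)
qed

lemma row_design:
  assumes "unitary2 U"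
  shows "(\<Sum>j<6. (\<Sum>m\<in>UNIV. dv j m * U$m$a) * cnj (\<Sum>m\<in>UNIV. dv j m * U$m$b)
           * (\<Sum>m\<in>UNIV. dv j m * U$m$c) * cnj (\<Sum>m\<in>UNIV. dv j m * U$m$d))
    = (if a = d \<and> c = b then 1 else 0) + (if a = b \<and> c = d then 1 else 0)"
proof -
  have s: "\<And>f::bool\<Rightarrow>complex. sum f UNIV = f False + f True" by (simp add: UNIV_bool)
  show ?thesis unfolding s 
  unfolding design unitary_cols[OF assms] by (cases a; cases b; cases c; cases d) simp_all
qed

lemma row_mult: "(Vmat k b ** U) $ b $ j = (\<Sum>m\<in>UNIV. dv k m * U$m$j)"
  by (simp add: matrix_matrix_mult_def Vmat_def)

definition amp :: "nat set \<Rightarrow> (nat set \<Rightarrow> complex) \<Rightarrow> (nat \<Rightarrow> bool \<Rightarrow> complex) \<Rightarrow> nat set \<Rightarrow> complex" where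
  "amp S psi R c = (\<Sum>y\<in>Pow S. (\<Prod>i\<in>S. R i (i \<in> y)) * psi (y \<union> c))"

definition Pc :: "nat \<Rightarrow> nat set \<Rightarrow> (nat set \<Rightarrow> complex) \<Rightarrow> (nat \<Rightarrow> bool \<Rightarrow> complex) \<Rightarrow> complex" where
  "Pc n S psi R = (\<Sum>c\<in>Pow ({1..n} - S). amp S psi R c * cnj (amp S psi R c))"

definition G :: "nat set \<Rightarrow> (nat \<Rightarrow> bool \<Rightarrow> complex) \<Rightarrow> nat set \<Rightarrow> nat set \<Rightarrow> complex" where
  "G S R y1 y2 = (\<Prod>i\<in>S. R i (i \<in> y1) * cnj (R i (i \<in> y2)))"

lemma Pc_G:
  "Pc n S psi R = (\<Sum>y1\<in>Pow S. \<Sum>y2\<in>Pow S. G S R y1 y2 * reduced_state n psi S y1 y2)"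
proof -
  have a: "amp S psi R c * cnj (amp S psi R c) =
     (\<Sum>y1\<in>Pow S. \<Sum>y2\<in>Pow S. G S R y1 y2 * (psi (y1 \<union> c) * cnj (psi (y2 \<union> c))))" for c
    unfolding amp_def G_def cnj_sum sum_product cnj_prod complex_cnj_mult prod.distrib
    by (simp add: mult_ac)
  have "Pc n S psi R = (\<Sum>c\<in>Pow ({1..n} - S). \<Sum>y1\<in>Pow S. \<Sum>y2\<in>Pow S. G S R y1 y2 * (psi (y1 \<union> c) * cnj (psi (y2 \<union> c))))"
    unfolding Pc_def a ..
  also have "\<dots> = (\<Sum>y1\<in>Pow S. \<Sum>y2\<in>Pow S. \<Sum>c\<in>Pow ({1..n} - S). G S R y1 y2 * (psi (y1 \<union> c) * cnj (psi (y2 \<union> c))))"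
    by (subst sum.swap) (rule sum.cong[OF refl], rule sum.swap)
  also have "\<dots> = (\<Sum>y1\<in>Pow S. \<Sum>y2\<in>Pow S. G S R y1 y2 * reduced_state n psi S y1 y2)"
    by (simp add: reduced_state_def sum_distrib_left)
  finally show ?thesis .
qed

lemma Pc_sq:
  "(Pc n S psi R)^2 = (\<Sum>y1\<in>Pow S. \<Sum>y2\<in>Pow S. \<Sum>y3\<in>Pow S. \<Sum>y4\<in>Pow S.
     (\<Prod>i\<in>S. R i (i \<in> y1) * cnj (R i (i \<in> y2)) * R i (i \<in> y3) * cnj (R i (i \<in> y4)))
     * (reduced_state n psi S y1 y2 * reduced_state n psi S y3 y4))"
proof -
  have "(Pc n S psi R)^2 = (\<Sum>y1\<in>Pow S. \<Sum>y2\<in>Pow S. \<Sum>y3\<in>Pow S. \<Sum>y4\<in>Pow S.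
     (G S R y1 y2 * G S R y3 y4) * (reduced_state n psi S y1 y2 * reduced_state n psi S y3 y4))"
    unfolding power2_eq_square Pc_G sum_distrib_right unfolding sum_distrib_left
    by (simp add: mult_ac)
  also have "\<dots> = (\<Sum>y1\<in>Pow S. \<Sum>y2\<in>Pow S. \<Sum>y3\<in>Pow S. \<Sum>y4\<in>Pow S.
     (\<Prod>i\<in>S. R i (i \<in> y1) * cnj (R i (i \<in> y2)) * R i (i \<in> y3) * cnj (R i (i \<in> y4)))
     * (reduced_state n psi S y1 y2 * reduced_state n psi S y3 y4))"
    unfolding G_def prod.distrib[symmetric] by (simp add: mult.assoc)
  finally show ?thesis .
qed

definition Dd :: "bool \<Rightarrow> bool \<Rightarrow> bool \<Rightarrow> bool \<Rightarrow> complex" where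
  "Dd a b c d = (if a = d \<and> c = b then 1 else 0) + (if a = b \<and> c = d then 1 else 0)"

definition rowp :: "(nat \<Rightarrow> complex^bool^bool) \<Rightarrow> (nat \<Rightarrow> nat) \<Rightarrow> nat \<Rightarrow> bool \<Rightarrow> complex" where
  "rowp U k i b = (\<Sum>m\<in>UNIV. dv (k i) m * U i $ m $ b)"

lemma avg_point:
  assumes fin: "finite S" and U: "\<forall>i\<in>S. unitary2 (U i)"
  shows "(\<Sum>k\<in>PiE S (\<lambda>_. {..<6::nat}). (\<Prod>i\<in>S. rowp U k i (i \<in> y1)
       * cnj (rowp U k i (i \<in> y2)) * rowp U k i (i \<in> y3) * cnj (rowp U k i (i \<in> y4))) * X)
     = (\<Prod>i\<in>S. Dd (i \<in> y1) (i \<in> y2) (i \<in> y3) (i \<in> y4)) * X"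
proof -
  have "(\<Sum>k\<in>PiE S (\<lambda>_. {..<6::nat}). (\<Prod>i\<in>S. rowp U k i (i \<in> y1)
       * cnj (rowp U k i (i \<in> y2)) * rowp U k i (i \<in> y3) * cnj (rowp U k i (i \<in> y4))))
     = (\<Prod>i\<in>S. \<Sum>j<6. (\<Sum>m\<in>UNIV. dv j m * U i $ m $ (i \<in> y1))
       * cnj (\<Sum>m\<in>UNIV. dv j m * U i $ m $ (i \<in> y2)) * (\<Sum>m\<in>UNIV. dv j m * U i $ m $ (i \<in> y3))
       * cnj (\<Sum>m\<in>UNIV. dv j m * U i $ m $ (i \<in> y4)))"
    unfolding rowp_def by (rule prod_sum_PiE[symmetric]) (simp_all add: fin)
  also have "\<dots> = (\<Prod>i\<in>S. Dd (i \<in> y1) (i \<in> y2) (i \<in> y3) (i \<in> y4))"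
  proof (rule prod.cong[OF refl])
    fix i assume "i \<in> S"
    then have "unitary2 (U i)" using U by auto
    then show "(\<Sum>j<6. (\<Sum>m\<in>UNIV. dv j m * U i $ m $ (i \<in> y1))
       * cnj (\<Sum>m\<in>UNIV. dv j m * U i $ m $ (i \<in> y2)) * (\<Sum>m\<in>UNIV. dv j m * U i $ m $ (i \<in> y3))
       * cnj (\<Sum>m\<in>UNIV. dv j m * U i $ m $ (i \<in> y4))) = Dd (i \<in> y1) (i \<in> y2) (i \<in> y3) (i \<in> y4)"
      unfolding Dd_def by (rule row_design)
  qed
  finally have e: "(\<Sum>k\<in>PiE S (\<lambda>_. {..<6::nat}). (\<Prod>i\<in>S. rowp U k i (i \<in> y1)
       * cnj (rowp U k i (i \<in> y2)) * rowp U k i (i \<in> y3) * cnj (rowp U k i (i \<in> y4))))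
     = (\<Prod>i\<in>S. Dd (i \<in> y1) (i \<in> y2) (i \<in> y3) (i \<in> y4))" .
  show ?thesis unfolding sum_distrib_right[symmetric] e ..
qed

lemma avg:
  assumes fin: "finite S" and U: "\<forall>i\<in>S. unitary2 (U i)"
  shows "(\<Sum>k\<in>PiE S (\<lambda>_. {..<6::nat}). (Pc n S psi (rowp U k))^2)
    = (\<Sum>y1\<in>Pow S. \<Sum>y2\<in>Pow S. \<Sum>y3\<in>Pow S. \<Sum>y4\<in>Pow S.
        (\<Prod>i\<in>S. Dd (i \<in> y1) (i \<in> y2) (i \<in> y3) (i \<in> y4))
        * (reduced_state n psi S y1 y2 * reduced_state n psi S y3 y4))"
  unfolding Pc_sq
  apply (subst sum.swap, rule sum.cong[OF refl])
  apply (subst sum.swap, rule sum.cong[OF refl])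
  apply (subst sum.swap, rule sum.cong[OF refl])
  apply (subst sum.swap, rule sum.cong[OF refl])
  apply (rule avg_point[OF fin U])
  done

definition Tr2 :: "nat \<Rightarrow> (nat set \<Rightarrow> complex) \<Rightarrow> nat set \<Rightarrow> complex" where
  "Tr2 n psi \<alpha> = (\<Sum>a\<in>Pow \<alpha>. \<Sum>b\<in>Pow \<alpha>. reduced_state n psi \<alpha> a b * reduced_state n psi \<alpha> b a)"

lemma ind_set_eq: assumes "\<alpha> \<subseteq> S" "y1 \<subseteq> S" "y2 \<subseteq> S" "y3 \<subseteq> S" "y4 \<subseteq> S"
  shows "((\<forall>i\<in>\<alpha>. (i \<in> y1) = (i \<in> y4) \<and> (i \<in> y3) = (i \<in> y2)) \<and> (\<forall>i\<in>S - \<alpha>. (i \<in> y1) = (i \<in> y2) \<and> (i \<in> y3) = (i \<in> y4)))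
      = (y2 = (y1 - \<alpha>) \<union> (y3 \<inter> \<alpha>) \<and> y4 = (y3 - \<alpha>) \<union> (y1 \<inter> \<alpha>))"
proof
  assume h: "(\<forall>i\<in>\<alpha>. (i \<in> y1) = (i \<in> y4) \<and> (i \<in> y3) = (i \<in> y2)) \<and> (\<forall>i\<in>S - \<alpha>. (i \<in> y1) = (i \<in> y2) \<and> (i \<in> y3) = (i \<in> y4))"
  show "y2 = (y1 - \<alpha>) \<union> (y3 \<inter> \<alpha>) \<and> y4 = (y3 - \<alpha>) \<union> (y1 \<inter> \<alpha>)"
  proof (intro conjI set_eqI)
    fix x show "x \<in> y2 \<longleftrightarrow> x \<in> (y1 - \<alpha>) \<union> (y3 \<inter> \<alpha>)"
      using h assms by (cases "x \<in> \<alpha>"; cases "x \<in> S") auto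
  next
    fix x show "x \<in> y4 \<longleftrightarrow> x \<in> (y3 - \<alpha>) \<union> (y1 \<inter> \<alpha>)"
      using h assms by (cases "x \<in> \<alpha>"; cases "x \<in> S") auto
  qed
next
  assume "y2 = (y1 - \<alpha>) \<union> (y3 \<inter> \<alpha>) \<and> y4 = (y3 - \<alpha>) \<union> (y1 \<inter> \<alpha>)"
  then show "(\<forall>i\<in>\<alpha>. (i \<in> y1) = (i \<in> y4) \<and> (i \<in> y3) = (i \<in> y2)) \<and> (\<forall>i\<in>S - \<alpha>. (i \<in> y1) = (i \<in> y2) \<and> (i \<in> y3) = (i \<in> y4))"
    by auto
qed

lemma Un_inj_disj: assumes "A \<inter> B = {}" "a \<subseteq> A" "b \<subseteq> B" "a' \<subseteq> A" "b' \<subseteq> B"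
  shows "(a \<union> b = a' \<union> b') = ((a, b) = (a', b'))"
proof -
  have h: "(a\<union>b) \<inter> A = a" "(a\<union>b)\<inter>B = b" "(a'\<union>b')\<inter>A = a'" "(a'\<union>b')\<inter>B = b'"
    using assms by auto
  show ?thesis using h by auto
qed

lemma sum_Pow_Un:
  assumes "finite A" "finite B" "A \<inter> B = {}"
  shows "(\<Sum>x\<in>Pow (A \<union> B). f x) = (\<Sum>a\<in>Pow A. \<Sum>b\<in>Pow B. f (a \<union> b))"
proof -
  have bij: "bij_betw (\<lambda>(a, b). a \<union> b) (Pow A \<times> Pow B) (Pow (A \<union> B))"
  proof (rule bij_betwI')
    fix x y assume "x \<in> Pow A \<times> Pow B" "y \<in> Pow A \<times> Pow B"
    then show "((case x of (a, b) \<Rightarrow> a \<union> b) = (case y of (a, b) \<Rightarrow> a \<union> b)) = (x = y)"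
      using Un_inj_disj[OF assms(3)] by (cases x; cases y) auto
  next
    fix x assume "x \<in> Pow A \<times> Pow B"
    then show "(case x of (a, b) \<Rightarrow> a \<union> b) \<in> Pow (A \<union> B)" by auto
  next
    fix y assume "y \<in> Pow (A \<union> B)"
    then show "\<exists>x\<in>Pow A \<times> Pow B. y = (case x of (a, b) \<Rightarrow> a \<union> b)"
      by (intro bexI[of _ "(y \<inter> A, y \<inter> B)"]) auto
  qed
  have "(\<Sum>a\<in>Pow A. \<Sum>b\<in>Pow B. f (a \<union> b)) = (\<Sum>(a,b)\<in>Pow A \<times> Pow B. f (a \<union> b))"
    by (rule sum.cartesian_product)
  also have "\<dots> = (\<Sum>x\<in>Pow A \<times> Pow B. f ((\<lambda>(a, b). a \<union> b) x))"
    by (simp add: case_prod_unfold)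
  also have "\<dots> = (\<Sum>x\<in>Pow (A \<union> B). f x)"
    by (rule sum.reindex_bij_betw[OF bij])
  finally show ?thesis ..
qed

lemma partial_trace:
  assumes "\<alpha> \<subseteq> S" "S \<subseteq> {1..n}"
  shows "reduced_state n psi \<alpha> a b = (\<Sum>p\<in>Pow (S - \<alpha>). reduced_state n psi S (a \<union> p) (b \<union> p))"
proof -
  have e: "{1..n} - \<alpha> = (S - \<alpha>) \<union> ({1..n} - S)" using assms by auto
  have fS: "finite S" using assms(2) finite_subset by blast
  show ?thesis
    unfolding reduced_state_def e
    by (subst sum_Pow_Un) (use fS in \<open>auto simp: Un_assoc\<close>)
qed

lemma prod_ind:
  assumes "finite A"
  shows "(\<Prod>i\<in>A. if P i then (1::complex) else 0) = (if \<forall>i\<in>A. P i then 1 else 0)"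
  using assms by (induction rule: finite_induct) auto

lemma ind_eq:
  assumes "finite S" "\<alpha> \<subseteq> S" "y1 \<subseteq> S" "y2 \<subseteq> S" "y3 \<subseteq> S" "y4 \<subseteq> S"
  shows "(\<Prod>i\<in>\<alpha>. if (i \<in> y1) = (i \<in> y4) \<and> (i \<in> y3) = (i \<in> y2) then 1 else 0)
       * (\<Prod>i\<in>S - \<alpha>. if (i \<in> y1) = (i \<in> y2) \<and> (i \<in> y3) = (i \<in> y4) then 1 else 0)
       = (if y2 = (y1 - \<alpha>) \<union> (y3 \<inter> \<alpha>) \<and> y4 = (y3 - \<alpha>) \<union> (y1 \<inter> \<alpha>) then (1::complex) else 0)"
proof -
  have fa: "finite \<alpha>" using assms finite_subset by blast
  have m: "\<And>A B. (if A then (1::complex) else 0) * (if B then 1 else 0) = (if A \<and> B then 1 else 0)" by simp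
  have e: "((\<forall>i\<in>\<alpha>. (i \<in> y1) = (i \<in> y4) \<and> (i \<in> y3) = (i \<in> y2)) \<and> (\<forall>i\<in>S - \<alpha>. (i \<in> y1) = (i \<in> y2) \<and> (i \<in> y3) = (i \<in> y4)))
      = (y2 = (y1 - \<alpha>) \<union> (y3 \<inter> \<alpha>) \<and> y4 = (y3 - \<alpha>) \<union> (y1 \<inter> \<alpha>))"
    using assms by (intro ind_set_eq) auto
  have "(\<Prod>i\<in>\<alpha>. if (i \<in> y1) = (i \<in> y4) \<and> (i \<in> y3) = (i \<in> y2) then 1 else 0)
       * (\<Prod>i\<in>S - \<alpha>. if (i \<in> y1) = (i \<in> y2) \<and> (i \<in> y3) = (i \<in> y4) then 1 else 0)
    = (if \<forall>i\<in>\<alpha>. (i \<in> y1) = (i \<in> y4) \<and> (i \<in> y3) = (i \<in> y2) then (1::complex) else 0)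
     * (if \<forall>i\<in>S - \<alpha>. (i \<in> y1) = (i \<in> y2) \<and> (i \<in> y3) = (i \<in> y4) then 1 else 0)"
    using fa assms(1) by (simp only: prod_ind finite_Diff)
  also have "\<dots> = (if (\<forall>i\<in>\<alpha>. (i \<in> y1) = (i \<in> y4) \<and> (i \<in> y3) = (i \<in> y2)) \<and> (\<forall>i\<in>S - \<alpha>. (i \<in> y1) = (i \<in> y2) \<and> (i \<in> y3) = (i \<in> y4)) then 1 else 0)"
    by (rule m)
  also have "\<dots> = (if y2 = (y1 - \<alpha>) \<union> (y3 \<inter> \<alpha>) \<and> y4 = (y3 - \<alpha>) \<union> (y1 \<inter> \<alpha>) then (1::complex) else 0)"
    by (simp only: e)
  finally show ?thesis .
qed

lemma collapse:
  assumes "finite S" "\<alpha> \<subseteq> S"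
  shows "(\<Sum>y1\<in>Pow S. \<Sum>y2\<in>Pow S. \<Sum>y3\<in>Pow S. \<Sum>y4\<in>Pow S.
      (if y2 = (y1 - \<alpha>) \<union> (y3 \<inter> \<alpha>) \<and> y4 = (y3 - \<alpha>) \<union> (y1 \<inter> \<alpha>) then (1::complex) else 0) * f y1 y2 y3 y4)
    = (\<Sum>y1\<in>Pow S. \<Sum>y3\<in>Pow S. f y1 ((y1 - \<alpha>) \<union> (y3 \<inter> \<alpha>)) y3 ((y3 - \<alpha>) \<union> (y1 \<inter> \<alpha>)))"
proof -
  have i4: "(\<Sum>y4\<in>Pow S. (if y2 = (y1 - \<alpha>) \<union> (y3 \<inter> \<alpha>) \<and> y4 = (y3 - \<alpha>) \<union> (y1 \<inter> \<alpha>) then (1::complex) else 0) * f y1 y2 y3 y4)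
     = (if y2 = (y1 - \<alpha>) \<union> (y3 \<inter> \<alpha>) then f y1 y2 y3 ((y3 - \<alpha>) \<union> (y1 \<inter> \<alpha>)) else 0)"
    if "y1 \<subseteq> S" "y3 \<subseteq> S" for y1 y2 y3
  proof (cases "y2 = (y1 - \<alpha>) \<union> (y3 \<inter> \<alpha>)")
    case True
    have m: "\<And>P x. (if P then (1::complex) else 0) * x = (if P then x else 0)" by simp
    have "(y3 - \<alpha>) \<union> (y1 \<inter> \<alpha>) \<in> Pow S" using that by auto
    then show ?thesis using True assms(1) by (simp only: m simp_thms if_True) (subst sum.delta, auto)
  next
    case False
    then show ?thesis by simp
  qed
  have "(\<Sum>y1\<in>Pow S. \<Sum>y2\<in>Pow S. \<Sum>y3\<in>Pow S. \<Sum>y4\<in>Pow S.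
      (if y2 = (y1 - \<alpha>) \<union> (y3 \<inter> \<alpha>) \<and> y4 = (y3 - \<alpha>) \<union> (y1 \<inter> \<alpha>) then (1::complex) else 0) * f y1 y2 y3 y4)
    = (\<Sum>y1\<in>Pow S. \<Sum>y2\<in>Pow S. \<Sum>y3\<in>Pow S. (if y2 = (y1 - \<alpha>) \<union> (y3 \<inter> \<alpha>) then f y1 y2 y3 ((y3 - \<alpha>) \<union> (y1 \<inter> \<alpha>)) else 0))"
    by (intro sum.cong refl) (simp add: i4)
  also have "\<dots> = (\<Sum>y1\<in>Pow S. \<Sum>y3\<in>Pow S. \<Sum>y2\<in>Pow S. (if y2 = (y1 - \<alpha>) \<union> (y3 \<inter> \<alpha>) then f y1 y2 y3 ((y3 - \<alpha>) \<union> (y1 \<inter> \<alpha>)) else 0))"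
    by (rule sum.cong[OF refl], rule sum.swap)
  also have "\<dots> = (\<Sum>y1\<in>Pow S. \<Sum>y3\<in>Pow S. f y1 ((y1 - \<alpha>) \<union> (y3 \<inter> \<alpha>)) y3 ((y3 - \<alpha>) \<union> (y1 \<inter> \<alpha>)))"
  proof (intro sum.cong refl)
    fix y1 y3 assume "y1 \<in> Pow S" "y3 \<in> Pow S"
    then have "(y1 - \<alpha>) \<union> (y3 \<inter> \<alpha>) \<in> Pow S" by auto
    then show "(\<Sum>y2\<in>Pow S. (if y2 = (y1 - \<alpha>) \<union> (y3 \<inter> \<alpha>) then f y1 y2 y3 ((y3 - \<alpha>) \<union> (y1 \<inter> \<alpha>)) else 0))
      = f y1 ((y1 - \<alpha>) \<union> (y3 \<inter> \<alpha>)) y3 ((y3 - \<alpha>) \<union> (y1 \<inter> \<alpha>))"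
      using assms(1) by (subst sum.delta) auto
  qed
  finally show ?thesis .
qed

lemma alpha_term:
  assumes "\<alpha> \<subseteq> S" "S \<subseteq> {1..n}"
  shows "(\<Sum>y1\<in>Pow S. \<Sum>y2\<in>Pow S. \<Sum>y3\<in>Pow S. \<Sum>y4\<in>Pow S.
   ((\<Prod>i\<in>\<alpha>. if (i \<in> y1) = (i \<in> y4) \<and> (i \<in> y3) = (i \<in> y2) then 1 else 0)
     * (\<Prod>i\<in>S - \<alpha>. if (i \<in> y1) = (i \<in> y2) \<and> (i \<in> y3) = (i \<in> y4) then 1 else 0))
   * (reduced_state n psi S y1 y2 * reduced_state n psi S y3 y4)) = Tr2 n psi \<alpha>"
proof -
  have fS: "finite S" using assms(2) finite_subset by blast
  have fa: "finite \<alpha>" using assms(1) fS finite_subset by blast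
  let ?r = "reduced_state n psi S"
  have "(\<Sum>y1\<in>Pow S. \<Sum>y2\<in>Pow S. \<Sum>y3\<in>Pow S. \<Sum>y4\<in>Pow S.
   ((\<Prod>i\<in>\<alpha>. if (i \<in> y1) = (i \<in> y4) \<and> (i \<in> y3) = (i \<in> y2) then 1 else 0)
     * (\<Prod>i\<in>S - \<alpha>. if (i \<in> y1) = (i \<in> y2) \<and> (i \<in> y3) = (i \<in> y4) then 1 else 0))
   * (?r y1 y2 * ?r y3 y4))
   = (\<Sum>y1\<in>Pow S. \<Sum>y2\<in>Pow S. \<Sum>y3\<in>Pow S. \<Sum>y4\<in>Pow S.
      (if y2 = (y1 - \<alpha>) \<union> (y3 \<inter> \<alpha>) \<and> y4 = (y3 - \<alpha>) \<union> (y1 \<inter> \<alpha>) then (1::complex) else 0) * (?r y1 y2 * ?r y3 y4))"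
    by (intro sum.cong refl, subst ind_eq) (use fS assms(1) in auto)
  also have "\<dots> = (\<Sum>y1\<in>Pow S. \<Sum>y3\<in>Pow S. ?r y1 ((y1 - \<alpha>) \<union> (y3 \<inter> \<alpha>)) * ?r y3 ((y3 - \<alpha>) \<union> (y1 \<inter> \<alpha>)))"
    by (rule collapse[OF fS assms(1)])
  also have "\<dots> = (\<Sum>a\<in>Pow \<alpha>. \<Sum>p\<in>Pow (S - \<alpha>). \<Sum>b\<in>Pow \<alpha>. \<Sum>q\<in>Pow (S - \<alpha>). ?r (a \<union> p) (p \<union> b) * ?r (b \<union> q) (q \<union> a))"
  proof -
    have PS: "Pow S = Pow (\<alpha> \<union> (S - \<alpha>))" using assms(1) by (simp add: Un_absorb1)
    have d: "\<alpha> \<inter> (S - \<alpha>) = {}" by auto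
    have E: "\<And>a p. a \<subseteq> \<alpha> \<Longrightarrow> p \<subseteq> S - \<alpha> \<Longrightarrow> (a \<union> p) - \<alpha> = p \<and> (a \<union> p) \<inter> \<alpha> = a" by auto
    show ?thesis unfolding PS sum_Pow_Un[OF fa finite_Diff[OF fS] d]
      by (intro sum.cong refl) (simp add: E)
  qed
  also have "\<dots> = (\<Sum>a\<in>Pow \<alpha>. \<Sum>b\<in>Pow \<alpha>. \<Sum>p\<in>Pow (S - \<alpha>). \<Sum>q\<in>Pow (S - \<alpha>). ?r (a \<union> p) (b \<union> p) * ?r (b \<union> q) (a \<union> q))"
    by (rule sum.cong[OF refl], subst sum.swap) (simp add: Un_commute)
  also have "\<dots> = Tr2 n psi \<alpha>"
    unfolding Tr2_def partial_trace[OF assms] sum_product ..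
  finally show ?thesis .
qed

lemma swap5:
  "(\<Sum>y1\<in>A. \<Sum>y2\<in>A. \<Sum>y3\<in>A. \<Sum>y4\<in>A. \<Sum>\<alpha>\<in>B. f y1 y2 y3 y4 \<alpha>)
   = (\<Sum>\<alpha>\<in>B. \<Sum>y1\<in>A. \<Sum>y2\<in>A. \<Sum>y3\<in>A. \<Sum>y4\<in>A. f y1 y2 y3 y4 \<alpha>)"
proof -
  have "(\<Sum>\<alpha>\<in>B. \<Sum>y1\<in>A. \<Sum>y2\<in>A. \<Sum>y3\<in>A. \<Sum>y4\<in>A. f y1 y2 y3 y4 \<alpha>)
      = (\<Sum>y1\<in>A. \<Sum>\<alpha>\<in>B. \<Sum>y2\<in>A. \<Sum>y3\<in>A. \<Sum>y4\<in>A. f y1 y2 y3 y4 \<alpha>)"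
    by (rule sum.swap)
  also have "\<dots> = (\<Sum>y1\<in>A. \<Sum>y2\<in>A. \<Sum>\<alpha>\<in>B. \<Sum>y3\<in>A. \<Sum>y4\<in>A. f y1 y2 y3 y4 \<alpha>)"
    by (rule sum.cong[OF refl], rule sum.swap)
  also have "\<dots> = (\<Sum>y1\<in>A. \<Sum>y2\<in>A. \<Sum>y3\<in>A. \<Sum>\<alpha>\<in>B. \<Sum>y4\<in>A. f y1 y2 y3 y4 \<alpha>)"
    by (rule sum.cong[OF refl], rule sum.cong[OF refl], rule sum.swap)
  also have "\<dots> = (\<Sum>y1\<in>A. \<Sum>y2\<in>A. \<Sum>y3\<in>A. \<Sum>y4\<in>A. \<Sum>\<alpha>\<in>B. f y1 y2 y3 y4 \<alpha>)"
    by (rule sum.cong[OF refl], rule sum.cong[OF refl], rule sum.cong[OF refl], rule sum.swap)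
  finally show ?thesis by (rule sym)
qed

lemma main_alg:
  assumes S: "S \<subseteq> {1..n}" and U: "\<forall>i\<in>S. unitary2 (U i)"
  shows "(\<Sum>k\<in>PiE S (\<lambda>_. {..<6::nat}). (Pc n S psi (rowp U k))^2) = (\<Sum>\<alpha>\<in>Pow S. Tr2 n psi \<alpha>)"
proof -
  have fS: "finite S" using S finite_subset by blast
  have pa: "(\<Prod>i\<in>S. Dd (i \<in> y1) (i \<in> y2) (i \<in> y3) (i \<in> y4)) =
    (\<Sum>\<alpha>\<in>Pow S. (\<Prod>i\<in>\<alpha>. if (i \<in> y1) = (i \<in> y4) \<and> (i \<in> y3) = (i \<in> y2) then 1 else 0)
     * (\<Prod>i\<in>S - \<alpha>. if (i \<in> y1) = (i \<in> y2) \<and> (i \<in> y3) = (i \<in> y4) then 1 else 0))" for y1 y2 y3 y4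
    unfolding Dd_def by (rule prod_add[OF fS, of "\<lambda>i. if (i \<in> y1) = (i \<in> y4) \<and> (i \<in> y3) = (i \<in> y2) then 1 else 0" "\<lambda>i. if (i \<in> y1) = (i \<in> y2) \<and> (i \<in> y3) = (i \<in> y4) then 1 else 0"])
  have "(\<Sum>k\<in>PiE S (\<lambda>_. {..<6::nat}). (Pc n S psi (rowp U k))^2)
    = (\<Sum>y1\<in>Pow S. \<Sum>y2\<in>Pow S. \<Sum>y3\<in>Pow S. \<Sum>y4\<in>Pow S. \<Sum>\<alpha>\<in>Pow S.
   ((\<Prod>i\<in>\<alpha>. if (i \<in> y1) = (i \<in> y4) \<and> (i \<in> y3) = (i \<in> y2) then 1 else 0)
     * (\<Prod>i\<in>S - \<alpha>. if (i \<in> y1) = (i \<in> y2) \<and> (i \<in> y3) = (i \<in> y4) then 1 else 0))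
   * (reduced_state n psi S y1 y2 * reduced_state n psi S y3 y4))"
    unfolding avg[OF fS U] pa sum_distrib_right ..
  also have "\<dots> = (\<Sum>\<alpha>\<in>Pow S. \<Sum>y1\<in>Pow S. \<Sum>y2\<in>Pow S. \<Sum>y3\<in>Pow S. \<Sum>y4\<in>Pow S.
   ((\<Prod>i\<in>\<alpha>. if (i \<in> y1) = (i \<in> y4) \<and> (i \<in> y3) = (i \<in> y2) then 1 else 0)
     * (\<Prod>i\<in>S - \<alpha>. if (i \<in> y1) = (i \<in> y2) \<and> (i \<in> y3) = (i \<in> y4) then 1 else 0))
   * (reduced_state n psi S y1 y2 * reduced_state n psi S y3 y4))"
    by (rule swap5)
  also have "\<dots> = (\<Sum>\<alpha>\<in>Pow S. Tr2 n psi \<alpha>)"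
  proof (rule sum.cong[OF refl])
    fix \<alpha> assume "\<alpha> \<in> Pow S"
    then show "(\<Sum>y1\<in>Pow S. \<Sum>y2\<in>Pow S. \<Sum>y3\<in>Pow S. \<Sum>y4\<in>Pow S.
   ((\<Prod>i\<in>\<alpha>. if (i \<in> y1) = (i \<in> y4) \<and> (i \<in> y3) = (i \<in> y2) then 1 else 0)
     * (\<Prod>i\<in>S - \<alpha>. if (i \<in> y1) = (i \<in> y2) \<and> (i \<in> y3) = (i \<in> y4) then 1 else 0))
   * (reduced_state n psi S y1 y2 * reduced_state n psi S y3 y4)) = Tr2 n psi \<alpha>"
      using alpha_term[OF _ S] by blast
  qed
  finally show ?thesis .
qed
lemma mvec: "(\<lambda>U::complex^bool^bool. U $ a $ b) \<in> borel_measurable borel"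
  by (intro borel_measurable_continuous_onI continuous_intros)
lemma mmul: "(\<lambda>U::complex^bool^bool. V ** U) \<in> borel \<rightarrow>\<^sub>M borel"
proof -
  have "continuous_on UNIV (\<lambda>U::complex^bool^bool. V ** U)"
    unfolding matrix_matrix_mult_def
    by (intro continuous_on_vec_lambda continuous_intros)
  then show ?thesis by (rule borel_measurable_continuous_onI)
qed
lemma meas_F:
  assumes "sets \<mu> = sets (borel :: (complex^bool^bool) measure)"
  shows "(\<lambda>Us. meas_prob n S Us psi z) \<in> borel_measurable (PiM S (\<lambda>_. \<mu>))"
proof -
  have c: "(\<lambda>Us. Us i $ a $ b) \<in> borel_measurable (PiM S (\<lambda>_. \<mu>))" if "i \<in> S" for i a b
  proof -
    have "(\<lambda>U::complex^bool^bool. U $ a $ b) \<in> borel_measurable \<mu>"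
      unfolding measurable_cong_sets[OF assms refl] by (rule mvec)
    from measurable_comp[OF measurable_component_singleton[OF that, of "\<lambda>_. \<mu>"] this]
    show ?thesis by (simp add: o_def)
  qed
  have p: "(\<lambda>Us. \<Prod>i\<in>S. Us i $ (i\<in>x) $ (i\<in>y)) \<in> borel_measurable (PiM S (\<lambda>_. \<mu>))" for x y
    by (rule borel_measurable_prod) (rule c)
  have a: "(\<lambda>Us. apply_local n S Us psi x) \<in> borel_measurable (PiM S (\<lambda>_. \<mu>))" for x
    unfolding apply_local_def by (intro borel_measurable_sum borel_measurable_times p borel_measurable_const)
  show ?thesis unfolding meas_prob_def
    by (intro borel_measurable_sum borel_measurable_power measurable_compose[OF a borel_measurable_norm])
qed
lemma PiM_inv:
  assumes H: "haar_U2 \<mu>" and fin: "finite S" and V: "\<forall>i\<in>S. unitary2 (V i)"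
  shows "distr (PiM S (\<lambda>_. \<mu>)) (PiM S (\<lambda>_. \<mu>)) (\<lambda>x. \<lambda>i\<in>S. V i ** x i) = PiM S (\<lambda>_. \<mu>)"
proof -
  have ps: "prob_space \<mu>" and se: "sets \<mu> = sets borel" and inv: "\<And>W. unitary2 W \<Longrightarrow> distr \<mu> borel (\<lambda>U. W ** U) = \<mu>"
    using H unfolding haar_U2_def by auto
  interpret P: product_prob_space "\<lambda>_. \<mu>"
    by (intro product_prob_spaceI ps)
  have mf: "(\<lambda>U. W ** U) \<in> \<mu> \<rightarrow>\<^sub>M \<mu>" for W
    unfolding measurable_cong_sets[OF se se] by (rule mmul)
  have dist: "distr \<mu> \<mu> (\<lambda>U. V i ** U) = \<mu>" if "i \<in> S" for i
  proof -
    have "distr \<mu> \<mu> (\<lambda>U. V i ** U) = distr \<mu> borel (\<lambda>U. V i ** U)"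
      by (rule distr_cong) (auto simp: se)
    also have "\<dots> = \<mu>" using inv V that by auto
    finally show ?thesis .
  qed
  have mg: "(\<lambda>x. \<lambda>i\<in>S. V i ** x i) \<in> PiM S (\<lambda>_. \<mu>) \<rightarrow>\<^sub>M PiM S (\<lambda>_. \<mu>)"
  proof (intro measurable_restrict)
    fix i assume "i \<in> S"
    show "(\<lambda>x. V i ** x i) \<in> PiM S (\<lambda>_. \<mu>) \<rightarrow>\<^sub>M \<mu>"
      using measurable_compose[OF measurable_component_singleton[OF \<open>i \<in> S\<close>, of "\<lambda>_. \<mu>"] mf[of "V i"]] .
  qed
  show ?thesis
  proof (rule P.PiM_eqI[OF fin])
    show "sets (distr (PiM S (\<lambda>_. \<mu>)) (PiM S (\<lambda>_. \<mu>)) (\<lambda>x. \<lambda>i\<in>S. V i ** x i)) = sets (PiM S (\<lambda>_. \<mu>))"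
      by simp
    fix A assume A: "\<And>i. i \<in> S \<Longrightarrow> A i \<in> sets \<mu>"
    have "emeasure (distr (PiM S (\<lambda>_. \<mu>)) (PiM S (\<lambda>_. \<mu>)) (\<lambda>x. \<lambda>i\<in>S. V i ** x i)) (PiE S A)
        = emeasure (PiM S (\<lambda>_. \<mu>)) ((\<lambda>x. \<lambda>i\<in>S. V i ** x i) -` PiE S A \<inter> space (PiM S (\<lambda>_. \<mu>)))"
      by (rule emeasure_distr[OF mg]) (intro sets_PiM_I_finite fin A)
    also have "(\<lambda>x. \<lambda>i\<in>S. V i ** x i) -` PiE S A \<inter> space (PiM S (\<lambda>_. \<mu>))
        = PiE S (\<lambda>i. (\<lambda>U. V i ** U) -` A i \<inter> space \<mu>)"
      by (auto simp: space_PiM PiE_def Pi_def extensional_def)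
    also have "emeasure (PiM S (\<lambda>_. \<mu>)) (PiE S (\<lambda>i. (\<lambda>U. V i ** U) -` A i \<inter> space \<mu>))
        = (\<Prod>i\<in>S. emeasure \<mu> ((\<lambda>U. V i ** U) -` A i \<inter> space \<mu>))"
      using A mf by (intro P.emeasure_PiM fin) (auto intro: measurable_sets)
    also have "\<dots> = (\<Prod>i\<in>S. emeasure (distr \<mu> \<mu> (\<lambda>U. V i ** U)) (A i))"
      using A mf by (intro prod.cong refl emeasure_distr[symmetric]) auto
    also have "\<dots> = (\<Prod>i\<in>S. emeasure \<mu> (A i))"
      using dist by (intro prod.cong) auto
    finally show "emeasure (distr (PiM S (\<lambda>_. \<mu>)) (PiM S (\<lambda>_. \<mu>)) (\<lambda>x. \<lambda>i\<in>S. V i ** x i)) (PiE S A) = (\<Prod>i\<in>S. emeasure \<mu> (A i))" .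
  qed
qed

lemma meas_Pc:
  assumes S: "S \<subseteq> {1..n}" and z: "z \<subseteq> S"
  shows "complex_of_real (meas_prob n S Us psi z) = Pc n S psi (\<lambda>i b. Us i $ (i \<in> z) $ b)"
proof -
  have fS: "finite S" using S finite_subset by blast
  have al: "apply_local n S Us psi (z \<union> c) = amp S psi (\<lambda>i b. Us i $ (i \<in> z) $ b) c"
    if c: "c \<subseteq> {1..n} - S" for c
  proof -
    have bij: "bij_betw (\<lambda>y. y \<union> c) (Pow S) {y \<in> Pow {1..n}. y - S = z \<union> c - S}"
    proof (rule bij_betwI')
      fix x y assume "x \<in> Pow S" "y \<in> Pow S"
      then show "(x \<union> c = y \<union> c) = (x = y)" using c by blast
    next
      fix x assume "x \<in> Pow S"
      then show "x \<union> c \<in> {y \<in> Pow {1..n}. y - S = z \<union> c - S}" using c S z by auto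
    next
      fix y assume "y \<in> {y \<in> Pow {1..n}. y - S = z \<union> c - S}"
      then have "y = (y \<inter> S) \<union> c" using c z by auto
      then show "\<exists>x\<in>Pow S. y = x \<union> c" by blast
    qed
    have "apply_local n S Us psi (z \<union> c) = (\<Sum>y\<in>Pow S. (\<Prod>i\<in>S. Us i $ (i \<in> z \<union> c) $ (i \<in> y \<union> c)) * psi (y \<union> c))"
      unfolding apply_local_def by (rule sum.reindex_bij_betw[OF bij, symmetric])
    also have "\<dots> = amp S psi (\<lambda>i b. Us i $ (i \<in> z) $ b) c"
      unfolding amp_def
    proof (intro sum.cong refl arg_cong2[where f = "(*)"] prod.cong)
      fix y i assume "i \<in> S"
      then have "i \<notin> c" using c by auto
      then show "Us i $ (i \<in> z \<union> c) $ (i \<in> y \<union> c) = Us i $ (i \<in> z) $ (i \<in> y)" by simp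
    qed
    finally show ?thesis .
  qed
  show ?thesis
    unfolding meas_prob_def Pc_def of_real_sum complex_norm_square
    by (intro sum.cong refl) (simp add: al)
qed

lemma Pc_cong:
  assumes "\<And>i b. i \<in> S \<Longrightarrow> R i b = R' i b"
  shows "Pc n S psi R = Pc n S psi R'"
  unfolding Pc_def amp_def using assms by (simp cong: prod.cong)

lemma Tr2_empty:
  assumes "pure_state n psi"
  shows "Tr2 n psi {} = 1"
proof -
  have "(\<Sum>x\<in>Pow {1..n}. psi x * cnj (psi x)) = complex_of_real (\<Sum>x\<in>Pow {1..n}. (cmod (psi x))\<^sup>2)"
    by (simp only: of_real_sum complex_norm_square)
  also have "\<dots> = 1" using assms unfolding pure_state_def by simp
  finally have "(\<Sum>x\<in>Pow {1..n}. psi x * cnj (psi x)) = 1" .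
  then show ?thesis unfolding Tr2_def reduced_state_def by simp
qed

lemma purity_Tr2:
  assumes "pure_state n psi"
  shows "purity n psi \<alpha> = Re (Tr2 n psi \<alpha>)"
proof (cases "\<alpha> = {}")
  case True
  then show ?thesis using Tr2_empty[OF assms] by (simp add: purity_def)
next
  case False
  then show ?thesis by (simp add: purity_def Tr2_def)
qed

lemma adj2_mult: "adj2 (A ** B) = adj2 B ** adj2 A"
  by (simp add: adj2_def matrix_matrix_mult_def vec_eq_iff mult.commute)

lemma unitary_mult:
  assumes "unitary2 A" "unitary2 B"
  shows "unitary2 (A ** B)"
proof -
  have "(A ** B) ** adj2 (A ** B) = A ** (B ** adj2 B) ** adj2 A"
    by (simp add: adj2_mult matrix_mul_assoc)
  also have "\<dots> = mat 1" using assms unfolding unitary2_def by (simp add: matrix_mul_rid)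
  finally show ?thesis unfolding unitary2_def .
qed

lemma unitary_entry:
  assumes "unitary2 U"
  shows "cmod (U $ a $ b) \<le> 1"
proof -
  have "(U ** adj2 U) $ a $ a = 1" using assms unfolding unitary2_def by (simp add: mat_def)
  then have "U $ a $ False * cnj (U $ a $ False) + U $ a $ True * cnj (U $ a $ True) = 1"
    by (simp add: matrix_matrix_mult_def adj2_def UNIV_bool)
  then have "complex_of_real ((cmod (U $ a $ False))\<^sup>2 + (cmod (U $ a $ True))\<^sup>2) = 1"
    by (simp only: of_real_add complex_norm_square)
  then have e: "(cmod (U $ a $ False))\<^sup>2 + (cmod (U $ a $ True))\<^sup>2 = 1"
    using of_real_eq_1_iff by blast
  have nn: "0 \<le> (cmod (U $ a $ False))\<^sup>2" "0 \<le> (cmod (U $ a $ True))\<^sup>2" by simp_all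
  have le: "(cmod (U $ a $ False))\<^sup>2 \<le> 1" "(cmod (U $ a $ True))\<^sup>2 \<le> 1" using e nn by linarith+
  have "(cmod (U $ a $ b))\<^sup>2 \<le> 1" using le by (cases b) simp_all
  then show ?thesis by (simp add: power_le_one_iff abs_square_le_1)
qed

lemma meas_restrict_mult:
  assumes se: "sets \<mu> = sets (borel :: (complex^bool^bool) measure)"
  shows "(\<lambda>x. \<lambda>i\<in>S. V i ** x i) \<in> PiM S (\<lambda>_. \<mu>) \<rightarrow>\<^sub>M PiM S (\<lambda>_. \<mu>)"
proof (intro measurable_restrict)
  have mf: "(\<lambda>U. W ** U) \<in> \<mu> \<rightarrow>\<^sub>M \<mu>" for W
    unfolding measurable_cong_sets[OF se se] by (rule mmul)
  fix i assume "i \<in> S"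
  show "(\<lambda>x. V i ** x i) \<in> PiM S (\<lambda>_. \<mu>) \<rightarrow>\<^sub>M \<mu>"
    using measurable_compose[OF measurable_component_singleton[OF \<open>i \<in> S\<close>, of "\<lambda>_. \<mu>"] mf[of "V i"]] .
qed

lemma meas_nonneg: "0 \<le> meas_prob n S W psi z"
  unfolding meas_prob_def by (intro sum_nonneg) simp

lemma meas_bound:
  assumes S: "S \<subseteq> {1..n}" and W: "\<forall>i\<in>S. unitary2 (W i)"
  shows "meas_prob n S W psi z \<le> real (card (Pow ({1..n} - S))) * (\<Sum>y\<in>Pow {1..n}. cmod (psi y))\<^sup>2"
proof -
  let ?A = "\<Sum>y\<in>Pow {1..n}. cmod (psi y)"
  have al: "cmod (apply_local n S W psi x) \<le> ?A" for x
  proof -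
    have "cmod (apply_local n S W psi x) \<le> (\<Sum>y\<in>{y\<in>Pow {1..n}. y - S = x - S}. cmod ((\<Prod>i\<in>S. W i $ (i \<in> x) $ (i \<in> y)) * psi y))"
      unfolding apply_local_def by (rule norm_sum)
    also have "\<dots> \<le> (\<Sum>y\<in>{y\<in>Pow {1..n}. y - S = x - S}. cmod (psi y))"
    proof (rule sum_mono)
      fix y
      have "cmod (\<Prod>i\<in>S. W i $ (i \<in> x) $ (i \<in> y)) = (\<Prod>i\<in>S. cmod (W i $ (i \<in> x) $ (i \<in> y)))"
        by (simp add: prod_norm)
      also have "\<dots> \<le> 1" using W unitary_entry by (intro prod_le_1) auto
      finally have "cmod (\<Prod>i\<in>S. W i $ (i \<in> x) $ (i \<in> y)) \<le> 1" .
      then show "cmod ((\<Prod>i\<in>S. W i $ (i \<in> x) $ (i \<in> y)) * psi y) \<le> cmod (psi y)"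
        by (simp add: norm_mult mult_left_le_one_le)
    qed
    also have "\<dots> \<le> ?A" by (rule sum_mono2) auto
    finally show ?thesis .
  qed
  have "meas_prob n S W psi z \<le> (\<Sum>c\<in>Pow ({1..n} - S). ?A\<^sup>2)"
    unfolding meas_prob_def by (intro sum_mono power_mono al) simp
  also have "\<dots> = real (card (Pow ({1..n} - S))) * ?A\<^sup>2" by simp
  finally show ?thesis .
qed

theorem proposition3:
  fixes n :: nat and S z :: "nat set" and psi :: "nat set \<Rightarrow> complex"
    and \<mu> :: "(complex^bool^bool) measure"
  assumes "pure_state n psi"
    and "S \<subseteq> {1..n}" and "S \<noteq> {}"
    and "haar_U2 \<mu>"
    and "z \<subseteq> S"
  shows "conc_ent n psi S =
           1 - 3 ^ card S * (\<integral>Us. (meas_prob n S Us psi z)\<^sup>2 \<partial>(PiM S (\<lambda>_. \<mu>)))"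
proof -
  note pure = assms(1) and S = assms(2) and H = assms(4) and z = assms(5)
  have fS: "finite S" using S finite_subset by blast
  have ps: "prob_space \<mu>" and se: "sets \<mu> = sets borel" and AEu: "AE U in \<mu>. unitary2 U"
    using H unfolding haar_U2_def by auto
  define M where "M = PiM S (\<lambda>_. \<mu>)"
  define F where "F = (\<lambda>Us. (meas_prob n S Us psi z)\<^sup>2)"
  define K where "K = PiE S (\<lambda>_. {..<6::nat})"
  define g where "g = (\<lambda>(k::nat \<Rightarrow> nat) (Us::nat \<Rightarrow> complex^bool^bool). \<lambda>i\<in>S. Vmat (k i) (i \<in> z) ** Us i)"
  define C where "C = Re (\<Sum>\<alpha>\<in>Pow S. Tr2 n psi \<alpha>)"
  define B where "B = real (card (Pow ({1..n} - S))) * (\<Sum>y\<in>Pow {1..n}. cmod (psi y))\<^sup>2"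
  interpret P: prob_space M unfolding M_def by (rule prob_space_PiM) (rule ps)
  have Fm: "F \<in> borel_measurable M"
    unfolding F_def M_def by (intro borel_measurable_power meas_F se)
  have gm: "g k \<in> M \<rightarrow>\<^sub>M M" for k
    unfolding g_def M_def by (rule meas_restrict_mult[OF se])
  have inv: "integral\<^sup>L M F = integral\<^sup>L M (\<lambda>x. F (g k x))" for k
  proof -
    have "distr M M (g k) = M"
      unfolding M_def g_def by (rule PiM_inv[OF H fS]) (simp add: Vmat_unitary)
    then have "integral\<^sup>L M F = integral\<^sup>L (distr M M (g k)) F" by simp
    also have "\<dots> = integral\<^sup>L M (\<lambda>x. F (g k x))" by (rule integral_distr[OF gm Fm])
    finally show ?thesis .
  qed
  have AEU: "AE x in M. \<forall>i\<in>S. unitary2 (x i)"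
    unfolding M_def
    by (intro eventually_ball_finite fS ballI AE_PiM_component[where M="\<lambda>_. \<mu>"] ps AEu)
  have gU: "\<forall>i\<in>S. unitary2 (g k x i)" if "\<forall>i\<in>S. unitary2 (x i)" for k x
    using that unfolding g_def by (simp add: unitary_mult Vmat_unitary)
  have pt: "(\<Sum>k\<in>K. F (g k x)) = C" if xu: "\<forall>i\<in>S. unitary2 (x i)" for x
  proof -
    have "complex_of_real (F (g k x)) = (Pc n S psi (rowp x k))\<^sup>2" for k
    proof -
      have "complex_of_real (F (g k x)) = (complex_of_real (meas_prob n S (g k x) psi z))\<^sup>2"
        unfolding F_def by simp
      also have "\<dots> = (Pc n S psi (\<lambda>i b. g k x i $ (i \<in> z) $ b))\<^sup>2"
        unfolding meas_Pc[OF S z] ..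
      also have "Pc n S psi (\<lambda>i b. g k x i $ (i \<in> z) $ b) = Pc n S psi (rowp x k)"
        by (rule Pc_cong) (simp add: g_def row_mult rowp_def)
      finally show ?thesis .
    qed
    then have "complex_of_real (\<Sum>k\<in>K. F (g k x)) = (\<Sum>k\<in>K. (Pc n S psi (rowp x k))\<^sup>2)"
      by (simp add: of_real_sum)
    also have "\<dots> = (\<Sum>\<alpha>\<in>Pow S. Tr2 n psi \<alpha>)"
      unfolding K_def by (rule main_alg[OF S xu])
    finally have "complex_of_real (\<Sum>k\<in>K. F (g k x)) = (\<Sum>\<alpha>\<in>Pow S. Tr2 n psi \<alpha>)" .
    then show ?thesis unfolding C_def by (metis Re_complex_of_real)
  qed
  have int: "integrable M (\<lambda>x. F (g k x))" for k
  proof (rule P.integrable_const_bound[where B = "B\<^sup>2"])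
    show "AE x in M. norm (F (g k x)) \<le> B\<^sup>2"
      using AEU
    proof eventually_elim
      case (elim x)
      have "meas_prob n S (g k x) psi z \<le> B"
        unfolding B_def by (rule meas_bound[OF S gU[OF elim]])
      then show ?case unfolding F_def using meas_nonneg
        by (simp add: power_mono)
    qed
    show "(\<lambda>x. F (g k x)) \<in> borel_measurable M"
      by (rule measurable_compose[OF gm Fm])
  qed
  have cardK: "card K = 6 ^ card S"
    unfolding K_def by (simp add: card_PiE fS)
  have "real (card K) * integral\<^sup>L M F = (\<Sum>k\<in>K. integral\<^sup>L M (\<lambda>x. F (g k x)))"
    using inv by simp
  also have "\<dots> = integral\<^sup>L M (\<lambda>x. \<Sum>k\<in>K. F (g k x))"
    using Bochner_Integration.integral_sum[where f="\<lambda>k x. F (g k x)" and I=K] int by simp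
  also have "\<dots> = integral\<^sup>L M (\<lambda>x. C)"
  proof (rule integral_cong_AE)
    show "(\<lambda>x. \<Sum>k\<in>K. F (g k x)) \<in> borel_measurable M"
      by (intro borel_measurable_sum measurable_compose[OF gm Fm])
    show "(\<lambda>x. C) \<in> borel_measurable M" by simp
    show "AE x in M. (\<Sum>k\<in>K. F (g k x)) = C"
      using AEU by eventually_elim (rule pt)
  qed
  also have "\<dots> = C" by (simp add: P.prob_space)
  finally have I: "6 ^ card S * integral\<^sup>L M F = C" unfolding cardK by simp
  have Cp: "C = (\<Sum>\<alpha>\<in>Pow S. purity n psi \<alpha>)"
    unfolding C_def Re_sum purity_Tr2[OF pure] ..
  have six: "(6::real) ^ card S = 2 ^ card S * 3 ^ card S"
    by (simp flip: power_mult_distrib)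
  have "conc_ent n psi S = 1 - (1 / 2 ^ card S) * (6 ^ card S * integral\<^sup>L M F)"
    unfolding conc_ent_def I Cp ..
  also have "\<dots> = 1 - 3 ^ card S * integral\<^sup>L M F"
    unfolding six by simp
  finally show ?thesis unfolding M_def F_def .
qed
end
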